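(* In the setting described in the context, let $(H,F^\bullet,W_\bullet)$ be the limiting mixed Hodge structure on $H=H^3(Y_s;\mathbb{C})$, $s\in S^*$. Then $$\dim_{\mathbb{C}}\bigl(F^2\cap\overline{F^1}\bigr)=h+1,$$ where $h=h^{2,1}(X)$.
   Context: Setting: $X$ is a projective Calabi-Yau threefold with $h=\dim H^1(X;\Omega^2_X)$, so $\dim H^3(X;\mathbb{C})=2h+2$. $C_1,\dots,C_r\subset X$ are disjoint smooth rational curves with normal bundles $\mathcal{O}(-1)\oplus\mathcal{O}(-1)$, whose classes span $H^4(X;\mathbb{C})$ and satisfy $\sum m_i[C_i]=0$ with all $m_i\ne0$; $\bar X$ is the contraction of the $C_i$ to ordinary double points. Let $\bar S$ be the base (a germ of $\mathbb{T}^1_{\bar X}=\mathrm{Ext}^1(\Omega^1_{\bar X},\mathcal{O}_{\bar X})$) of the semi-universal deformation of $\bar X$, let $S\to\bar S$ be the double cover branched along the smooth hypersurface $\bar S\cap H^1(\bar X,T^0_{\bar X})$, $D\subset S$ the inverse image of that hypersurface, and $\pi:\mathcal{Y}\to S$ the family obtained by pulling back the deformation and blowing up the singular points of the total space; $\mathcal{Y}$ is smooth and $\pi^{-1}(D)$ is a normal crossing divisor. Identify $S\cong\Delta^h\times\Delta$ with $D=\{\zeta=0\}$ and $S^*=S\setminus D$. The central fibre is $Y_0=\tilde X\cup\bigcup_i Q_i$, where $\tilde X$ is the blow-up of $X$ along the $C_i$ with exceptional divisors $E_i\cong\mathbb{P}^1\times\mathbb{P}^1$, $Q_i\subset\mathbb{P}^4$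 a smooth quadric containing $E_i$ as a hyperplane section, glued along $E_i$. The limiting mixed Hodge structure $(H,F^\bullet,W_\bullet)$ on $H=H^3(Y_s;\mathbb{C})$ ($s\in S^*$), defined over $\mathbb{Q}$ (Schmid, Steenbrink), has the following known properties: $0=W_1\subset W_2\subset W_3\subset W_4=H$ with $W_2\cong\mathbb{Q}(-1)$ one-dimensional, $W_3/W_2\cong H^3(\tilde X)\cong H^3(X)$ as Hodge structures, $W_4/W_3\cong\mathbb{Q}(-2)$; $\dim F^1=2h+3$ and $W_2\subset F^1$; $\dim F^2=h+2$, $F^2\cap W_2=0$ and $F^2+W_3=H$; $F^3\subseteq W_3$. Complex conjugation is with respect to the rational structure $H^3(Y_s;\mathbb{Q})$. *)

theory Defs
  imports "HOL-Analysis.Analysis"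
begin

text \<open>The complex vector space H is modelled as complex^'n with its rational
structure H_Q = Q^n (coordinates chosen in a rational basis).\<close>

definition cconj :: "complex ^ 'n \<Rightarrow> complex ^ 'n" where
  "cconj x = (\<chi> i. cnj (x $ i))"

definition conjset :: "(complex ^ 'n) set \<Rightarrow> (complex ^ 'n) set" where
  "conjset V = cconj ` V"

definition rational_points :: "(complex ^ 'n) set" where
  "rational_points = {x. \<forall>i. x $ i \<in> \<rat>}"

definition defined_over_Q :: "(complex ^ 'n) set \<Rightarrow> bool" where
  "defined_over_Q V \<longleftrightarrow> vec.subspace V \<and> V = vec.span (V \<inter> rational_points)"

definition ssum :: "(complex ^ 'n) set \<Rightarrow> (complex ^ 'n) set \<Rightarrow> (complex ^ 'n) set" where
  "ssum A B = {a + b | a b. a \<in> A \<and> b \<in> B}"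

text \<open>Gr^W_k with the induced filtration is a pure Hodge structure of weight k:
F^p Gr_k and conj(F^(k+1-p)) Gr_k are complementary in Gr_k = W_k / W_(k-1).\<close>
definition pure_graded :: "(int \<Rightarrow> (complex ^ 'n) set) \<Rightarrow> (int \<Rightarrow> (complex ^ 'n) set) \<Rightarrow> int \<Rightarrow> bool" where
  "pure_graded W F k \<longleftrightarrow> (\<forall>p.
     ssum (ssum (F p \<inter> W k) (conjset (F (k + 1 - p)) \<inter> W k)) (W (k - 1)) = W k \<and>
     ssum (F p \<inter> W k) (W (k - 1)) \<inter> ssum (conjset (F (k + 1 - p)) \<inter> W k) (W (k - 1))
       \<subseteq> W (k - 1))"

definition mixed_hodge_structure :: "(int \<Rightarrow> (complex ^ 'n) set) \<Rightarrow> (int \<Rightarrow> (complex ^ 'n) set) \<Rightarrow> bool" where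
  "mixed_hodge_structure W F \<longleftrightarrow>
     (\<forall>k. defined_over_Q (W k)) \<and> (\<forall>k l. k \<le> l \<longrightarrow> W k \<subseteq> W l) \<and>
     (\<exists>a. W a = {0}) \<and> (\<exists>b. W b = UNIV) \<and>
     (\<forall>p. vec.subspace (F p)) \<and> (\<forall>p q. p \<le> q \<longrightarrow> F q \<subseteq> F p) \<and>
     (\<exists>a. F a = UNIV) \<and> (\<exists>b. F b = {0}) \<and>
     (\<forall>k. pure_graded W F k)"

text \<open>dim_C of F^p Gr^W_k = (F^p \<inter> W_k + W_(k-1)) / W_(k-1).\<close>
definition grF_dim :: "(int \<Rightarrow> (complex ^ 'n) set) \<Rightarrow> (int \<Rightarrow> (complex ^ 'n) set) \<Rightarrow> int \<Rightarrow> int \<Rightarrow> nat" where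
  "grF_dim W F k p = vec.dim (ssum (F p \<inter> W k) (W (k - 1))) - vec.dim (W (k - 1))"

end

theory Submission
  imports Defs
begin

lemma cnj_rat: "(z::complex) \<in> \<rat> \<Longrightarrow> cnj z = z"
  by (auto elim!: Rats_cases simp: Reals_cnj_iff[symmetric] of_rat_def)

lemma cconj_cconj[simp]: "cconj (cconj x) = x"
  by (simp add: cconj_def vec_eq_iff)

lemma cconj_add: "cconj (x + y) = cconj x + cconj y"
  by (simp add: cconj_def vec_eq_iff)

lemma cconj_scale: "cconj (c *s x) = cnj c *s cconj x"
  by (simp add: cconj_def vec_eq_iff)

lemma cconj_zero[simp]: "cconj 0 = 0"
  by (simp add: cconj_def vec_eq_iff)

lemma cconj_eq_zero_iff[simp]: "cconj x = 0 \<longleftrightarrow> x = 0"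
  by (metis cconj_cconj cconj_zero)

lemma cconj_span:
  assumes "x \<in> vec.span S"
  shows "cconj x \<in> vec.span (cconj ` S)"
  using assms
proof (induction rule: vec.span_induct_alt)
  case base
  then show ?case by (simp add: vec.span_zero)
next
  case (step c x y)
  have "cconj x \<in> vec.span (cconj ` S)" using step(1) by (simp add: vec.span_base)
  then have "cnj c *s cconj x \<in> vec.span (cconj ` S)" by (rule vec.span_scale)
  then show ?case using step(2) by (simp add: cconj_add cconj_scale vec.span_add)
qed

lemma dim_cconj_le: "vec.dim (cconj ` V) \<le> vec.dim V"
proof -
  obtain B where B: "B \<subseteq> V" "vec.independent B" "V \<subseteq> vec.span B" "card B = vec.dim V"
    by (rule vec.basis_exists)
  have fin: "finite B" using B(2) vec.finiteI_independent by blast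
  have "cconj ` V \<subseteq> vec.span (cconj ` B)" using B(3) cconj_span by blast
  then have "vec.dim (cconj ` V) \<le> card (cconj ` B)"
    using fin by (simp add: vec.dim_le_card)
  also have "\<dots> \<le> card B" using fin by (rule card_image_le)
  finally show ?thesis using B(4) by simp
qed

lemma dim_cconj: "vec.dim (cconj ` V) = vec.dim V"
proof -
  have "vec.dim (cconj ` cconj ` V) \<le> vec.dim (cconj ` V)" by (rule dim_cconj_le)
  moreover have "cconj ` cconj ` V = V" by (simp add: image_image)
  ultimately show ?thesis using dim_cconj_le[of V] by simp
qed

lemma subspace_cconj:
  assumes "vec.subspace V"
  shows "vec.subspace (cconj ` V)"
  unfolding vec.subspace_def
proof (intro conjI ballI allI)
  show "0 \<in> cconj ` V" using assms vec.subspace_0 by (metis cconj_zero image_eqI)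
next
  fix x y assume "x \<in> cconj ` V" "y \<in> cconj ` V"
  then obtain a b where "a \<in> V" "b \<in> V" "x = cconj a" "y = cconj b" by auto
  then show "x + y \<in> cconj ` V"
    using assms vec.subspace_add by (metis cconj_add image_eqI)
next
  fix c x assume "x \<in> cconj ` V"
  then obtain a where "a \<in> V" "x = cconj a" by auto
  then show "c *s x \<in> cconj ` V"
    using assms vec.subspace_scale
    by (metis cconj_scale complex_cnj_cnj image_eqI)
qed

lemma rational_cconj:
  assumes "defined_over_Q V" "x \<in> V"
  shows "cconj x \<in> V"
proof -
  have V: "V = vec.span (V \<inter> rational_points)" using assms(1) by (simp add: defined_over_Q_def)
  have "cconj ` (V \<inter> rational_points) = V \<inter> rational_points"
  proof -
    have "cconj y = y" if "y \<in> rational_points" for y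
      using that unfolding rational_points_def cconj_def
      by (simp add: vec_eq_iff cnj_rat)
    then have "cconj ` (V \<inter> rational_points) = (\<lambda>y. y) ` (V \<inter> rational_points)"
      by (intro image_cong) auto
    then show ?thesis by simp
  qed
  then show ?thesis using cconj_span[of x "V \<inter> rational_points"] assms(2) V by simp
qed

theorem lemma3p3:
  fixes h :: nat
    and W F :: "int \<Rightarrow> (complex ^ 'n) set"
  assumes dimH: "CARD('n) = 2 * h + 4"
    and mhs: "mixed_hodge_structure W F"
    and W1: "W 1 = {0}" and W12: "W 1 \<subseteq> W 2" and W23: "W 2 \<subseteq> W 3" and W34: "W 3 \<subseteq> W 4"
    and W4: "W 4 = UNIV"
    and W2_dim: "vec.dim (W 2) = 1"
    and W2_F1: "W 2 \<subseteq> F 1" and W2_F2: "F 2 \<inter> W 2 = {0}"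
    and Gr3_dim: "vec.dim (W 3) - vec.dim (W 2) = 2 * h + 2"
    and Gr3_F0: "grF_dim W F 3 0 = 2 * h + 2"
    and Gr3_F1: "grF_dim W F 3 1 = 2 * h + 1"
    and Gr3_F2: "grF_dim W F 3 2 = h + 1"
    and Gr3_F3: "grF_dim W F 3 3 = 1"
    and Gr3_F4: "grF_dim W F 3 4 = 0"
    and Gr4_dim: "vec.dim (W 4) - vec.dim (W 3) = 1"
    and F1_dim: "vec.dim (F 1) = 2 * h + 3"
    and F2_dim: "vec.dim (F 2) = h + 2"
    and F2_W3: "ssum (F 2) (W 3) = UNIV"
    and F3_W3: "F 3 \<subseteq> W 3"
  shows "vec.dim (F 2 \<inter> conjset (F 1)) = h + 1"
proof -
  have Wq: "\<And>k. defined_over_Q (W k)" and Fsub: "\<And>p. vec.subspace (F p)"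
    and Fdec: "\<And>p q. p \<le> q \<Longrightarrow> F q \<subseteq> F p" and pure: "\<And>k. pure_graded W F k"
    using mhs unfolding mixed_hodge_structure_def by auto
  have W2sub: "vec.subspace (W 2)" using Wq[of 2] by (simp add: defined_over_Q_def)
  have W3sub: "vec.subspace (W 3)" using Wq[of 3] by (simp add: defined_over_Q_def)
  obtain f where f: "f \<in> F 3" "f \<noteq> 0"
  proof (rule ccontr)
    assume "\<not> thesis"
    with that have "F 3 \<subseteq> {0}" by auto
    then have "F 3 \<inter> W 3 \<subseteq> {0}" by auto
    then have "ssum (F 3 \<inter> W 3) (W (3 - 1)) \<subseteq> W 2"
      unfolding ssum_def by auto
    then have "vec.dim (ssum (F 3 \<inter> W 3) (W (3 - 1))) \<le> vec.dim (W 2)"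
      by (rule vec.dim_subset)
    then show False using Gr3_F3 unfolding grF_dim_def by simp
  qed
  have fW3: "f \<in> W 3" using f F3_W3 by auto
  have cfW3: "cconj f \<in> W 3" using rational_cconj[OF Wq fW3] .
  have notF1: "cconj f \<notin> F 1"
  proof
    assume cf: "cconj f \<in> F 1"
    have P: "ssum (F 1 \<inter> W 3) (W (3 - 1)) \<inter> ssum (conjset (F (3 + 1 - 1)) \<inter> W 3) (W (3 - 1))
       \<subseteq> W (3 - 1)"
      using pure[of 3] unfolding pure_graded_def by blast
    then have P2: "ssum (F 1 \<inter> W 3) (W 2) \<inter> ssum (conjset (F 3) \<inter> W 3) (W 2) \<subseteq> W 2"
      by simp
    have z: "(0::complex^'n) \<in> W 2" using W2sub vec.subspace_0 by blast
    have m1: "cconj f \<in> ssum (F 1 \<inter> W 3) (W 2)"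
      unfolding ssum_def using cf cfW3 z
      by (intro CollectI exI[of _ "cconj f"] exI[of _ 0]) simp
    have cf3: "cconj f \<in> conjset (F 3)" unfolding conjset_def using f(1) by (rule imageI)
    have m2: "cconj f \<in> ssum (conjset (F 3) \<inter> W 3) (W 2)"
      unfolding ssum_def using cf3 cfW3 z
      by (intro CollectI exI[of _ "cconj f"] exI[of _ 0]) simp
    have "cconj f \<in> W 2" using P2 m1 m2 by blast
    then have "f \<in> W 2" using rational_cconj[OF Wq, of "cconj f" 2] by simp
    moreover have "f \<in> F 2" using f Fdec[of 2 3] by auto
    ultimately show False using W2_F2 f by auto
  qed
  have sub1: "vec.subspace (conjset (F 1))" unfolding conjset_def by (rule subspace_cconj[OF Fsub])
  have sub2: "vec.subspace (F 2 \<inter> conjset (F 1))" using Fsub[of 2] sub1 by (rule vec.subspace_inter)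
  have dimc: "vec.dim (conjset (F 1)) = 2 * h + 3" unfolding conjset_def using dim_cconj[of "F 1"] F1_dim by simp
  have sums: "vec.dim {x + y |x y. x \<in> F 2 \<and> y \<in> conjset (F 1)} + vec.dim (F 2 \<inter> conjset (F 1))
      = vec.dim (F 2) + vec.dim (conjset (F 1))"
    by (rule vec.dim_sums_Int[OF Fsub sub1])
  have le: "vec.dim {x + y |x y. x \<in> F 2 \<and> y \<in> conjset (F 1)} \<le> 2 * h + 4"
    using dim_subset_UNIV_cart_gen[of "{x + y |x y. x \<in> F 2 \<and> y \<in> conjset (F 1)}"] dimH by simp
  have ge: "vec.dim (F 2 \<inter> conjset (F 1)) \<ge> h + 1" using sums le dimc F2_dim by linarith
  have "f \<in> F 2" using f Fdec[of 2 3] by auto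
  moreover have "f \<notin> conjset (F 1)"
  proof
    assume "f \<in> conjset (F 1)"
    then obtain g where "g \<in> F 1" "f = cconj g" unfolding conjset_def by blast
    then show False using notF1 by simp
  qed
  ultimately have "F 2 \<inter> conjset (F 1) \<subset> F 2" by blast
  then have "vec.span (F 2 \<inter> conjset (F 1)) \<subset> vec.span (F 2)"
  proof -
    have e1: "vec.span (F 2 \<inter> conjset (F 1)) = F 2 \<inter> conjset (F 1)"
      using sub2 by (rule vec.span_eq_iff[THEN iffD2])
    have e2: "vec.span (F 2) = F 2" using Fsub[of 2] by (rule vec.span_eq_iff[THEN iffD2])
    show ?thesis unfolding e1 e2 by (rule \<open>F 2 \<inter> conjset (F 1) \<subset> F 2\<close>)
  qed
  then have "vec.dim (F 2 \<inter> conjset (F 1)) < vec.dim (F 2)" by (rule vec.dim_psubset)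
  then show ?thesis using ge F2_dim by linarith
qed

end
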